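(* Let $x\in\mathcal{X}$ and suppose the weights are arithmetic averages $W_{x,N}=\frac1N\sum_{k=1}^N W_x^{(k)}$, where $W_x^{(1)},W_x^{(2)},\dots$ are i.i.d. with law $Q_x$, $W_x^{(k)}>0$ a.s. and $\mathbb{E}_{Q_x}[W_x^{(k)}]=1$. If $\mathbb{E}_{Q_x}[W_x^{-1}]<\infty$ for $W_x\sim Q_x$, then $$\lim_{N\to\infty}\mathbb{E}_{Q_{x,N}}\left[W_{x,N}^{-1}\right]=1,$$ where $Q_{x,N}$ denotes the law of $W_{x,N}$. *)

theory Defs
  imports "HOL-Probability.Probability"
begin

end

theory Submission imports Defs "HOL-Probability.Hoeffding" begin

definition Vt :: "real \<Rightarrow> real \<Rightarrow> real" where "Vt K x = max 0 (min x K)"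
definition ht :: "real \<Rightarrow> real \<Rightarrow> real" where "ht L x = (if 1/x > L then 1/x else 0)"

lemma Vt_meas[measurable]: "Vt K \<in> borel_measurable borel"
  unfolding Vt_def by measurable
lemma ht_meas[measurable]: "ht L \<in> borel_measurable borel"
  unfolding ht_def by measurable

lemma tangent_inv:
  fixes w a :: real assumes "w > 0" "a > 0"
  shows "2 / a - w / a^2 \<le> 1 / w"
proof -
  have "0 \<le> (a - w)^2 / (w * a^2)" using assms by simp
  also have "(a - w)^2 / (w * a^2) = 1 / w - (2 / a - w / a^2)"
    using assms by (simp add: field_simps power2_eq_square)
  finally show ?thesis by simp
qed

lemma amhm:
  fixes w :: "nat \<Rightarrow> real" assumes "finite I" "I \<noteq> {}" "\<And>k. k\<in>I \<Longrightarrow> w k > 0"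
  shows "1 / ((\<Sum>k\<in>I. w k) / card I) \<le> (\<Sum>k\<in>I. 1 / w k) / card I"
proof -
  define a where "a = (\<Sum>k\<in>I. w k) / card I"
  have n: "real (card I) > 0" using assms by auto
  have "(\<Sum>k\<in>I. w k) > 0" using assms by (intro sum_pos) auto
  hence a: "a > 0" using n by (simp add: a_def)
  have "(\<Sum>k\<in>I. 2 / a - w k / a^2) \<le> (\<Sum>k\<in>I. 1 / w k)"
    by (intro sum_mono tangent_inv assms a)
  also have "(\<Sum>k\<in>I. 2 / a - w k / a^2) = card I * (2/a) - (\<Sum>k\<in>I. w k) / a^2"
    by (simp add: sum_subtractf sum_divide_distrib)
  also have "\<dots> = card I / a"
    using a n by (simp add: a_def field_simps power2_eq_square)
  finally have "card I / a \<le> (\<Sum>k\<in>I. 1 / w k)" .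
  thus ?thesis using n a unfolding a_def[symmetric] by (simp add: field_simps)
qed

lemma key_pw:
  fixes w :: "nat \<Rightarrow> real" and I :: "nat set"
  assumes "finite I" "I \<noteq> {}" "\<And>k. k\<in>I \<Longrightarrow> w k > 0" "0 < \<epsilon>" "\<epsilon> < 1" "L \<ge> 0"
    "m - \<epsilon>/2 \<ge> 1 - \<epsilon>"
  shows "1 / ((\<Sum>k\<in>I. w k) / card I) \<le> 1 / (1 - \<epsilon>) + (\<Sum>k\<in>I. ht L (w k)) / card I
           + L * (if (\<Sum>k\<in>I. Vt K (w k)) / card I \<le> m - \<epsilon>/2 then 1 else 0)"
proof -
  have n: "real (card I) > 0" using assms by auto
  have htnn: "ht L x \<ge> 0" for x unfolding ht_def using assms(6) by (smt (verit))
  have hsum: "(\<Sum>k\<in>I. ht L (w k)) / card I \<ge> 0" using n htnn by (simp add: sum_nonneg)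
  show ?thesis
  proof (cases "(\<Sum>k\<in>I. Vt K (w k)) / card I \<le> m - \<epsilon>/2")
    case True
    have "1 / ((\<Sum>k\<in>I. w k) / card I) \<le> (\<Sum>k\<in>I. 1 / w k) / card I"
      by (rule amhm) (use assms in auto)
    also have "\<dots> \<le> (\<Sum>k\<in>I. ht L (w k) + L) / card I"
      using n by (intro divide_right_mono sum_mono) (use assms(6) in \<open>auto simp: ht_def\<close>)
    also have "\<dots> = (\<Sum>k\<in>I. ht L (w k)) / card I + L"
      using n by (simp add: sum.distrib add_divide_distrib)
    finally have X: "1 / ((\<Sum>k\<in>I. w k) / card I) \<le> (\<Sum>k\<in>I. ht L (w k)) / card I + L" .
    have "0 < 1/(1-\<epsilon>)" using assms by simp
    thus ?thesis unfolding if_P[OF True] using X by linarith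
  next
    case False
    have "(\<Sum>k\<in>I. Vt K (w k)) \<le> (\<Sum>k\<in>I. w k)"
      using assms(3) by (intro sum_mono) (force simp: Vt_def)
    hence "(\<Sum>k\<in>I. Vt K (w k)) / card I \<le> (\<Sum>k\<in>I. w k) / card I"
      using n by (simp add: divide_right_mono)
    hence S: "(\<Sum>k\<in>I. w k) / card I > 1 - \<epsilon>" using False assms(7) by linarith
    have "0 < (1 - \<epsilon>) * ((\<Sum>k\<in>I. w k) / card I)"
      using assms(5) S by (intro mult_pos_pos) auto
    hence "1 / ((\<Sum>k\<in>I. w k) / card I) \<le> 1 / (1 - \<epsilon>)"
      using S by (intro divide_left_mono) (auto simp: mult.commute)
    thus ?thesis using False hsum by simp
  qed
qed


theorem proposition3p9:
  fixes M :: "'a measure" and Q :: "real measure" and W :: "nat \<Rightarrow> 'a \<Rightarrow> real"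
  assumes "prob_space M"
    and "prob_space.indep_vars M (\<lambda>_. borel) W UNIV"
    and "\<And>k. distr M borel (W k) = Q"
    and "AE w in Q. w > 0"
    and "integrable Q (\<lambda>w. w)"
    and "(\<integral>w. w \<partial>Q) = 1"
    and "integrable Q (\<lambda>w. 1 / w)"
  shows "(\<lambda>N. \<integral>w. 1 / w \<partial>(distr M borel (\<lambda>\<omega>. (\<Sum>k\<in>{1..N}. W k \<omega>) / real N)))
           \<longlonglongrightarrow> 1"
proof -
  interpret P: prob_space M by fact
  have rv[measurable]: "W k \<in> borel_measurable M" for k
    using assms(2) unfolding P.indep_vars_def by auto
  have Qd: "Q = distr M borel (W k)" for k using assms(3) by simp
  have posW: "AE \<omega> in M. W k \<omega> > 0" for k
  proof -
    have "AE w in distr M borel (W k). w > 0" using assms(4) unfolding Qd[of k] .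
    thus ?thesis by (subst (asm) AE_distr_iff) auto
  qed
  have posall: "AE \<omega> in M. \<forall>k. W k \<omega> > 0" using posW by (simp add: AE_all_countable)
  have intW: "integrable M (W k)" for k
    using assms(5) unfolding Qd[of k] by (subst (asm) integrable_distr_eq) auto
  have EW: "(\<integral>\<omega>. W k \<omega> \<partial>M) = 1" for k
    using assms(6) unfolding Qd[of k] by (subst (asm) integral_distr) auto
  have intinv: "integrable M (\<lambda>\<omega>. 1 / W k \<omega>)" for k
    using assms(7) unfolding Qd[of k] by (subst (asm) integrable_distr_eq) auto
  have inth: "integrable M (\<lambda>\<omega>. ht L (W k \<omega>))" for k L
    by (rule Bochner_Integration.integrable_bound[OF intinv[of k]]) (auto simp: ht_def)
  define T where "T L = (\<integral>\<omega>. ht L (W 0 \<omega>) \<partial>M)" for L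
  have Tk: "(\<integral>\<omega>. ht L (W k \<omega>) \<partial>M) = T L" for k L
  proof -
    have "(\<integral>\<omega>. ht L (W k \<omega>) \<partial>M) = (\<integral>x. ht L x \<partial>Q)"
      unfolding Qd[of k] by (subst integral_distr) auto
    also have "\<dots> = T L" unfolding Qd[of 0] T_def by (subst integral_distr) auto
    finally show ?thesis .
  qed
  define mu where "mu K = (\<integral>\<omega>. Vt K (W 0 \<omega>) \<partial>M)" for K
  have T_lim: "(\<lambda>n. T (real n)) \<longlonglongrightarrow> 0"
  proof -
    have "(\<lambda>n. \<integral>\<omega>. ht (real n) (W 0 \<omega>) \<partial>M) \<longlonglongrightarrow> (\<integral>\<omega>. 0 \<partial>M)"
    proof (rule integral_dominated_convergence[where w="\<lambda>\<omega>. 1 / W 0 \<omega>"])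
      show "AE \<omega> in M. (\<lambda>n. ht (real n) (W 0 \<omega>)) \<longlonglongrightarrow> 0"
        using posW[of 0]
      proof eventually_elim
        case (elim \<omega>)
        obtain n0 :: nat where n0: "1 / W 0 \<omega> < n0" using reals_Archimedean2 by blast
        have "eventually (\<lambda>n. ht (real n) (W 0 \<omega>) = 0) sequentially"
          unfolding eventually_sequentially ht_def
          using n0 by (intro exI[of _ n0]) auto
        thus ?case by (rule tendsto_eventually)
      qed
      show "AE \<omega> in M. norm (ht (real n) (W 0 \<omega>)) \<le> 1 / W 0 \<omega>" for n
        using posW[of 0] by eventually_elim (auto simp: ht_def)
    qed (auto intro: intinv)
    thus ?thesis by (simp add: T_def)
  qed
  have mu_lim: "(\<lambda>n. mu (real n)) \<longlonglongrightarrow> 1"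
  proof -
    have "(\<lambda>n. \<integral>\<omega>. Vt (real n) (W 0 \<omega>) \<partial>M) \<longlonglongrightarrow> (\<integral>\<omega>. W 0 \<omega> \<partial>M)"
    proof (rule integral_dominated_convergence[where w="\<lambda>\<omega>. norm (W 0 \<omega>)"])
      show "AE \<omega> in M. (\<lambda>n. Vt (real n) (W 0 \<omega>)) \<longlonglongrightarrow> W 0 \<omega>"
        using posW[of 0]
      proof eventually_elim
        case (elim \<omega>)
        obtain n0 :: nat where n0: "W 0 \<omega> < n0" using reals_Archimedean2 by blast
        have "eventually (\<lambda>n. Vt (real n) (W 0 \<omega>) = W 0 \<omega>) sequentially"
          unfolding eventually_sequentially Vt_def
          using n0 elim by (intro exI[of _ n0]) auto
        thus ?case by (rule tendsto_eventually)
      qed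
      show "AE \<omega> in M. norm (Vt (real n) (W 0 \<omega>)) \<le> norm (W 0 \<omega>)" for n
        by (auto simp: Vt_def)
    qed (auto intro: intW)
    thus ?thesis using EW[of 0] by (simp add: mu_def)
  qed
  define S where "S N \<omega> = (\<Sum>k\<in>{1..N}. W k \<omega>) / real N" for N \<omega>
  have Smeas[measurable]: "S N \<in> borel_measurable M" for N unfolding S_def by measurable
  have Spos: "S N \<omega> > 0" if "N \<ge> 1" "\<forall>k. W k \<omega> > 0" for N \<omega>
    using that unfolding S_def by (intro divide_pos_pos sum_pos) auto
  have intS: "integrable M (\<lambda>\<omega>. 1 / S N \<omega>)" if N: "N \<ge> 1" for N
  proof (rule Bochner_Integration.integrable_bound[where f="\<lambda>\<omega>. (\<Sum>k\<in>{1..N}. 1 / W k \<omega>) / real N"])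
    show "integrable M (\<lambda>\<omega>. (\<Sum>k\<in>{1..N}. 1 / W k \<omega>) / real N)"
      by (intro integrable_divide Bochner_Integration.integrable_sum) (rule intinv)
    show "(\<lambda>\<omega>. 1 / S N \<omega>) \<in> borel_measurable M" by measurable
    show "AE \<omega> in M. norm (1 / S N \<omega>) \<le> norm ((\<Sum>k\<in>{1..N}. 1 / W k \<omega>) / real N)"
      using posall
    proof eventually_elim
      case (elim \<omega>)
      have pos: "S N \<omega> > 0" using Spos N elim by blast
      have "1 / S N \<omega> \<le> (\<Sum>k\<in>{1..N}. 1 / W k \<omega>) / real N"
        using amhm[of "{1..N}" "\<lambda>k. W k \<omega>"] elim N by (simp add: S_def)
      moreover have "(\<Sum>k\<in>{1..N}. 1 / W k \<omega>) / real N \<le> \<bar>\<Sum>k\<in>{1..N}. 1 / W k \<omega>\<bar> / real N"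
        by (intro divide_right_mono) auto
      ultimately show ?case using pos by simp
    qed
  qed
  have ES: "(\<integral>\<omega>. S N \<omega> \<partial>M) = 1" if N: "N \<ge> 1" for N
  proof -
    have "(\<integral>\<omega>. S N \<omega> \<partial>M) = (\<Sum>k\<in>{1..N}. (\<integral>\<omega>. W k \<omega> \<partial>M)) / real N"
      unfolding S_def by (simp add: integral_sum intW)
    also have "\<dots> = 1" using N by (simp add: EW)
    finally show ?thesis .
  qed
  have lower: "(\<integral>\<omega>. 1 / S N \<omega> \<partial>M) \<ge> 1" if N: "N \<ge> 1" for N
  proof -
    have intSS: "integrable M (S N)" unfolding S_def by (intro integrable_divide Bochner_Integration.integrable_sum intW)
    have A: "(\<integral>\<omega>. 2 - S N \<omega> \<partial>M) = 1"
      using ES[OF N] intSS by (simp add: integral_diff P.prob_space)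
    have B: "(\<integral>\<omega>. 2 - S N \<omega> \<partial>M) \<le> (\<integral>\<omega>. 1 / S N \<omega> \<partial>M)"
    proof (rule integral_mono_AE)
      show "integrable M (\<lambda>\<omega>. 2 - S N \<omega>)" using intSS by simp
      show "integrable M (\<lambda>\<omega>. 1 / S N \<omega>)" by (rule intS[OF N])
      show "AE \<omega> in M. 2 - S N \<omega> \<le> 1 / S N \<omega>"
        using posall
      proof eventually_elim
        case (elim \<omega>)
        have pos: "S N \<omega> > 0" using Spos N elim by blast
        show ?case using tangent_inv[OF pos, of 1] by simp
      qed
    qed
    show ?thesis using A B by simp
  qed
  have hoeff: "P.prob {\<omega>\<in>space M. (\<Sum>k\<in>{1..N}. Vt K (W k \<omega>)) / real N \<le> mu K - \<epsilon>/2}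
      \<le> exp (-2 * real N * (\<epsilon>/2)^2 / K^2)" if N: "N \<ge> 1" and K: "K > 0" and e: "\<epsilon> > 0" for N K \<epsilon>
  proof -
    interpret H: Hoeffding_ineq_iid M "{1..N}" "\<lambda>k \<omega>. Vt K (W k \<omega>)" "\<lambda>\<omega>. Vt K (W 0 \<omega>)" 0 K "mu K"
    proof unfold_locales
      show "P.indep_vars (\<lambda>_. borel) (\<lambda>k \<omega>. Vt K (W k \<omega>)) {1..N}"
        by (rule P.indep_vars_subset[OF P.indep_vars_compose2[OF assms(2)]]) auto
      show "distr M borel (\<lambda>\<omega>. Vt K (W i \<omega>)) = distr M borel (\<lambda>\<omega>. Vt K (W 0 \<omega>))" for i
      proof -
        have "distr M borel (\<lambda>\<omega>. Vt K (W i \<omega>)) = distr (distr M borel (W i)) borel (Vt K)"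
          by (subst distr_distr) (auto simp: comp_def)
        also have "\<dots> = distr (distr M borel (W 0)) borel (Vt K)" using assms(3) by simp
        also have "\<dots> = distr M borel (\<lambda>\<omega>. Vt K (W 0 \<omega>))"
          by (subst distr_distr) (auto simp: comp_def)
        finally show ?thesis .
      qed
      show "AE x in M. Vt K (W 0 x) \<in> {0..K}" using K by (auto simp: Vt_def)
    qed (auto simp: mu_def)
    have "P.prob {\<omega>\<in>space M. (\<Sum>k\<in>{1..N}. Vt K (W k \<omega>)) / real (card {1..N}) \<le> mu K - \<epsilon>/2}
      \<le> exp (-2 * real (card {1..N}) * (\<epsilon>/2)^2 / (K - 0)^2)"
      by (rule H.Hoeffding_ineq_le') (use e K N in auto)
    thus ?thesis by simp
  qed
  have upper: "(\<integral>\<omega>. 1 / S N \<omega> \<partial>M) \<le> 1 / (1 - \<epsilon>) + T L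
      + L * P.prob {\<omega>\<in>space M. (\<Sum>k\<in>{1..N}. Vt K (W k \<omega>)) / real N \<le> mu K - \<epsilon>/2}"
    if N: "N \<ge> 1" and e: "0 < \<epsilon>" "\<epsilon> < 1" and L: "L \<ge> 0" and m: "mu K - \<epsilon>/2 \<ge> 1 - \<epsilon>"
    for N \<epsilon> L K
  proof -
    define B where "B = {\<omega>\<in>space M. (\<Sum>k\<in>{1..N}. Vt K (W k \<omega>)) / real N \<le> mu K - \<epsilon>/2}"
    have Bev[measurable]: "B \<in> P.events" unfolding B_def by measurable
    define f where "f \<omega> = 1 / (1 - \<epsilon>) + (\<Sum>k\<in>{1..N}. ht L (W k \<omega>)) / real N + L * indicator B \<omega>" for \<omega>
    have intB: "integrable M (indicator B :: 'a \<Rightarrow> real)"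
      using Bev by (intro integrable_real_indicator) (auto simp: P.emeasure_finite less_top[symmetric])
    have intsum: "integrable M (\<lambda>\<omega>. (\<Sum>k\<in>{1..N}. ht L (W k \<omega>)) / real N)"
      by (intro integrable_divide Bochner_Integration.integrable_sum) (rule inth)
    have intf: "integrable M f" unfolding f_def
      using intB intsum by (intro Bochner_Integration.integrable_add integrable_mult_right) auto
    have "(\<integral>\<omega>. f \<omega> \<partial>M) = 1 / (1 - \<epsilon>) + (\<integral>\<omega>. (\<Sum>k\<in>{1..N}. ht L (W k \<omega>)) / real N \<partial>M)
        + L * (\<integral>\<omega>. indicator B \<omega> \<partial>M)"
      unfolding f_def using intB intsum by (simp add: P.prob_space)
    also have "(\<integral>\<omega>. (\<Sum>k\<in>{1..N}. ht L (W k \<omega>)) / real N \<partial>M) = T L"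
      using N by (simp add: Bochner_Integration.integral_sum inth Tk)
    also have "(\<integral>\<omega>. indicator B \<omega> \<partial>M) = P.prob B"
      by (simp add: Int_absorb2 B_def measure_def)
    finally have If: "(\<integral>\<omega>. f \<omega> \<partial>M) = 1 / (1 - \<epsilon>) + T L + L * P.prob B" .
    have "(\<integral>\<omega>. 1 / S N \<omega> \<partial>M) \<le> (\<integral>\<omega>. f \<omega> \<partial>M)"
    proof (rule integral_mono_AE'[OF intf])
      show "AE \<omega> in M. 1 / S N \<omega> \<le> f \<omega>"
        using posall
      proof (rule AE_mp[OF _ AE_I2], intro impI)
        fix \<omega> assume \<omega>: "\<omega> \<in> space M" and pos: "\<forall>k. 0 < W k \<omega>"
        have "1 / S N \<omega> \<le> 1 / (1 - \<epsilon>) + (\<Sum>k\<in>{1..N}. ht L (W k \<omega>)) / card {1..N}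
           + L * (if (\<Sum>k\<in>{1..N}. Vt K (W k \<omega>)) / card {1..N} \<le> mu K - \<epsilon>/2 then 1 else 0)"
          unfolding S_def using key_pw[of "{1..N}" "\<lambda>k. W k \<omega>" \<epsilon> L "mu K" K] N e L m pos by simp
        thus "1 / S N \<omega> \<le> f \<omega>" using \<omega> by (simp add: f_def B_def indicator_def split: if_splits)
      qed
      show "AE \<omega> in M. 0 \<le> f \<omega>"
      proof (rule AE_I2)
        fix \<omega> have "ht L x \<ge> 0" for x unfolding ht_def using L by (smt (verit))
        hence "(\<Sum>k\<in>{1..N}. ht L (W k \<omega>)) / real N \<ge> 0" by (simp add: sum_nonneg)
        moreover have "1 / (1 - \<epsilon>) > 0" using e by simp
        moreover have "L * indicator B \<omega> \<ge> 0" using L by simp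
        ultimately show "0 \<le> f \<omega>" unfolding f_def by linarith
      qed
    qed
    thus ?thesis using If by (simp add: B_def)
  qed
  have eqd: "(\<integral>w. 1 / w \<partial>(distr M borel (\<lambda>\<omega>. (\<Sum>k\<in>{1..N}. W k \<omega>) / real N)))
      = (\<integral>\<omega>. 1 / S N \<omega> \<partial>M)" for N
    unfolding S_def by (subst integral_distr) auto
  have main: "(\<lambda>N. \<integral>\<omega>. 1 / S N \<omega> \<partial>M) \<longlonglongrightarrow> 1"
  proof (rule tendstoI)
    fix e :: real assume e: "e > 0"
    define \<epsilon> where "\<epsilon> = min (1/2) (e/6)"
    have \<epsilon>: "0 < \<epsilon>" "\<epsilon> \<le> 1/2" "\<epsilon> \<le> e/6" using e by (auto simp: \<epsilon>_def)
    have inv: "1 / (1 - \<epsilon>) \<le> 1 + e/3"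
    proof -
      have "\<epsilon> * (1 - 2*\<epsilon>) \<ge> 0" using \<epsilon> by (intro mult_nonneg_nonneg) auto
      hence "1 \<le> (1 + 2*\<epsilon>) * (1 - \<epsilon>)" by (simp add: algebra_simps)
      hence "1 / (1 - \<epsilon>) \<le> 1 + 2*\<epsilon>" using \<epsilon> by (simp add: divide_le_eq)
      thus ?thesis using \<epsilon> by linarith
    qed
    from tendstoD[OF T_lim, of "e/3"] e obtain n1 where n1: "dist (T (real n1)) 0 < e/3"
      by (auto simp: eventually_sequentially)
    have "eventually (\<lambda>n. dist (mu (real n)) 1 < \<epsilon>/2 \<and> n \<ge> 1) sequentially"
      using tendstoD[OF mu_lim, of "\<epsilon>/2"] \<epsilon> by (intro eventually_conj eventually_ge_at_top) auto
    then obtain n2 where n2: "dist (mu (real n2)) 1 < \<epsilon>/2" "n2 \<ge> 1"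
      by (auto simp: eventually_sequentially)
    define L where "L = real n1"
    define K where "K = real n2"
    have L: "L \<ge> 0" by (simp add: L_def)
    have K: "K > 0" using n2 by (simp add: K_def)
    have m: "mu K - \<epsilon>/2 \<ge> 1 - \<epsilon>"
    proof -
      have "\<bar>mu K - 1\<bar> < \<epsilon>/2" using n2(1) by (simp add: K_def dist_real_def)
      thus ?thesis by linarith
    qed
    have TL: "T L < e/3" using n1 by (simp add: L_def dist_real_def)
    define c where "c = 2 * (\<epsilon>/2)^2 / K^2"
    have c: "c > 0" using \<epsilon> K by (simp add: c_def)
    have lim1: "filterlim (\<lambda>N. c * real N) at_top sequentially"
      by (rule filterlim_tendsto_pos_mult_at_top[OF tendsto_const c filterlim_real_sequentially])
    have "((\<lambda>N. exp (- (c * real N))) \<longlongrightarrow> 0) sequentially"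
      by (rule filterlim_compose[OF exp_at_bot filterlim_compose[OF filterlim_uminus_at_bot_at_top lim1]])
    hence "((\<lambda>N. L * exp (- (c * real N))) \<longlongrightarrow> L * 0) sequentially"
      by (intro tendsto_mult tendsto_const)
    hence "eventually (\<lambda>N. L * exp (- (c * real N)) < e/3) sequentially"
      using e by (intro order_tendstoD(2)) auto
    moreover have "eventually (\<lambda>N. N \<ge> (1::nat)) sequentially" by (rule eventually_ge_at_top)
    ultimately show "eventually (\<lambda>N. dist (\<integral>\<omega>. 1 / S N \<omega> \<partial>M) 1 < e) sequentially"
    proof eventually_elim
      case (elim N)
      have lo: "(\<integral>\<omega>. 1 / S N \<omega> \<partial>M) \<ge> 1" using lower elim by simp
      have up: "(\<integral>\<omega>. 1 / S N \<omega> \<partial>M) \<le> 1 / (1 - \<epsilon>) + T L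
        + L * P.prob {\<omega>\<in>space M. (\<Sum>k\<in>{1..N}. Vt K (W k \<omega>)) / real N \<le> mu K - \<epsilon>/2}"
        using upper[of N \<epsilon> L K] elim \<epsilon> L m by simp
      have "P.prob {\<omega>\<in>space M. (\<Sum>k\<in>{1..N}. Vt K (W k \<omega>)) / real N \<le> mu K - \<epsilon>/2}
          \<le> exp (-2 * real N * (\<epsilon>/2)^2 / K^2)"
        using hoeff[of N K \<epsilon>] elim K \<epsilon> by simp
      also have "exp (-2 * real N * (\<epsilon>/2)^2 / K^2) = exp (- (c * real N))"
        by (simp add: c_def)
      finally have "L * P.prob {\<omega>\<in>space M. (\<Sum>k\<in>{1..N}. Vt K (W k \<omega>)) / real N \<le> mu K - \<epsilon>/2}
          \<le> L * exp (- (c * real N))" using L by (intro mult_left_mono)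
      thus ?case using lo up inv TL elim by (simp add: dist_real_def)
    qed
  qed
  show ?thesis unfolding eqd by (rule main)
qed

end
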